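(* Let $X$ be a finite dimensional real or complex Banach space, $K\subseteq B_X$ a Borel set, and $\mu$ an admissible probability measure on $K$. Then there is a point $\psi_0\in S_{X^*}$, depending on $\mu$, such that for every $n\in\mathbb N$ $$\mathbf c_n(X)\le \exp\left\{-n\int_K\log|\langle x,\psi_0\rangle|\,d\mu(x)\right\}.$$
   Context: For a Banach space $Y$, $B_Y$ and $S_Y$ denote its closed unit ball and unit sphere. For a Banach space $X$ over $\mathbb K\in\{\mathbb R,\mathbb C\}$ and $n\in\mathbb N$, $\mathbf c_n(X)$ is the smallest constant such that for all $\psi_1,\dots,\psi_n\in X^*$, $\|\psi_1\|\cdots\|\psi_n\|\le \mathbf c_n(X)\,\|\psi_1\cdots\psi_n\|$, where $\psi_1\cdots\psi_n$ is the pointwise product and $\|P\|=\sup_{x\in S_X}|P(x)|$. Admissibility: a Borel measure $\mu$ on a Borel set $K\subseteq B_X$ is admissible if $\int_K\log|\langle x,\psi\rangle|\,d\mu(x)$ is finite for every $\psi\in S_{X^*}$ and the functions $g_m(\psi)=\int_K\max\{\log|\langle x,\psi\rangle|,-m\}\,d\mu(x)$ converge uniformly on $S_{X^*}$, as $m\to\infty$, to $g(\psi)=\int_K\log|\langle x,\psi\rangle|\,d\mu(x)$. *)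

theory Defs
  imports "HOL-Analysis.Analysis" "HOL-Probability.Probability"
begin

text \<open>A finite dimensional Banach space over the scalar field 'k (real or complex)
  is modelled, up to linear isomorphism, as the coordinate space 'k^'n equipped with
  an arbitrary norm N.\<close>

definition is_norm_on :: "('k::real_normed_field ^ 'n::finite \<Rightarrow> real) \<Rightarrow> bool" where
  "is_norm_on N \<longleftrightarrow>
     (\<forall>x. N x = 0 \<longleftrightarrow> x = 0) \<and>
     (\<forall>(c::'k) x. N (c *s x) = norm c * N x) \<and>
     (\<forall>x y. N (x + y) \<le> N x + N y)"

definition klinear_fun :: "('k::real_normed_field ^ 'n::finite \<Rightarrow> 'k) \<Rightarrow> bool" where
  "klinear_fun \<psi> \<longleftrightarrow>
     (\<forall>x y. \<psi> (x + y) = \<psi> x + \<psi> y) \<and> (\<forall>(c::'k) x. \<psi> (c *s x) = c * \<psi> x)"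

definition sphere_sup :: "('k::real_normed_field ^ 'n::finite \<Rightarrow> real) \<Rightarrow> ('k ^ 'n \<Rightarrow> 'k) \<Rightarrow> real" where
  "sphere_sup N P = (SUP x\<in>{x. N x = 1}. norm (P x))"

definition c_const :: "('k::real_normed_field ^ 'n::finite \<Rightarrow> real) \<Rightarrow> nat \<Rightarrow> real" where
  "c_const N n = Inf {c. \<forall>\<psi> :: nat \<Rightarrow> ('k ^ 'n \<Rightarrow> 'k).
       (\<forall>i<n. klinear_fun (\<psi> i)) \<longrightarrow>
       (\<Prod>i<n. sphere_sup N (\<psi> i)) \<le> c * sphere_sup N (\<lambda>x. \<Prod>i<n. \<psi> i x)}"

text \<open>max(log t, -m), with the convention log 0 = -infinity.\<close>
definition trunc_log :: "nat \<Rightarrow> real \<Rightarrow> real" where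
  "trunc_log m t = (if t = 0 then - real m else max (ln t) (- real m))"

text \<open>Admissibility of a measure mu on K (with respect to the norm N).
  "The integral of log|<x,psi>| is finite" is read as: psi x \<noteq> 0 almost everywhere
  and ln |psi x| is integrable.\<close>
definition admissible :: "('k::real_normed_field ^ 'n::finite \<Rightarrow> real) \<Rightarrow> ('k ^ 'n) measure \<Rightarrow> bool" where
  "admissible N \<mu> \<longleftrightarrow>
     (\<forall>\<psi>. klinear_fun \<psi> \<and> sphere_sup N \<psi> = 1 \<longrightarrow>
          (AE x in \<mu>. \<psi> x \<noteq> 0) \<and> integrable \<mu> (\<lambda>x. ln (norm (\<psi> x)))) \<and>
     (\<forall>\<epsilon>>0. \<exists>M. \<forall>m\<ge>M. \<forall>\<psi>. klinear_fun \<psi> \<and> sphere_sup N \<psi> = 1 \<longrightarrow>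
          \<bar>(\<integral>x. trunc_log m (norm (\<psi> x)) \<partial>\<mu>) - (\<integral>x. ln (norm (\<psi> x)) \<partial>\<mu>)\<bar> < \<epsilon>)"

end

theory Submission imports Defs begin

lemma scaleR_as_smult: "r *\<^sub>R (x::'k::real_normed_field^'n) = (of_real r::'k) *s x"
  by (simp add: vec_eq_iff of_real_def)

locale nrm =
  fixes N :: "'k::{real_normed_field,heine_borel,second_countable_topology} ^ 'n::finite \<Rightarrow> real"
  assumes isn: "is_norm_on N"
begin

lemma N_zero_iff: "N x = 0 \<longleftrightarrow> x = 0" using isn by (simp add: is_norm_on_def)
lemma N_smult: "N (c *s x) = norm c * N x" using isn by (simp add: is_norm_on_def)
lemma N_add: "N (x + y) \<le> N x + N y" using isn by (simp add: is_norm_on_def)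
lemma N_0[simp]: "N 0 = 0" using N_zero_iff by simp
lemma N_scaleR: "N (r *\<^sub>R x) = \<bar>r\<bar> * N x" by (simp add: scaleR_as_smult N_smult)
lemma N_minus: "N (- x) = N x"
proof -
  have "- x = (-1::'k) *s x" by (rule vector_sneg_minus1)
  then have "N (- x) = norm (-1::'k) * N x" using N_smult by metis
  then show ?thesis by simp
qed
lemma N_nonneg: "N x \<ge> 0"
proof -
  have "N (x + - x) \<le> N x + N (- x)" by (rule N_add)
  then show ?thesis by (simp add: N_minus)
qed
lemma N_sum: "N (sum f A) \<le> (\<Sum>i\<in>A. N (f i))"
proof (induction A rule: infinite_finite_induct)
  case (insert a A) then show ?case using N_add[of "f a" "sum f A"] by simp
qed simp_all
lemma N_diff: "\<bar>N x - N y\<bar> \<le> N (x - y)"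
  using N_add[of "x - y" y] N_add[of "y - x" x] N_minus[of "x - y"] by (simp add: abs_le_iff)

lemma N_upper: "\<exists>C. \<forall>x. N x \<le> C * norm x"
proof -
  define C where "C = (\<Sum>i\<in>UNIV. N (axis i (1::'k)))"
  have "N x \<le> C * norm x" for x
  proof -
    have "N x = N (\<Sum>i\<in>UNIV. x$i *s axis i 1)" by (simp add: basis_expansion)
    also have "\<dots> \<le> (\<Sum>i\<in>UNIV. N (x$i *s axis i 1))" by (rule N_sum)
    also have "\<dots> = (\<Sum>i\<in>UNIV. norm (x$i) * N (axis i 1))" by (simp add: N_smult)
    also have "\<dots> \<le> (\<Sum>i\<in>UNIV. norm x * N (axis i 1))"
      by (intro sum_mono mult_right_mono) (simp_all add: N_nonneg Finite_Cartesian_Product.norm_nth_le)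
    also have "\<dots> = C * norm x" by (simp add: C_def sum_distrib_left mult.commute)
    finally show ?thesis .
  qed
  then show ?thesis by blast
qed

lemma N_cont: "continuous_on UNIV N"
proof -
  obtain C where C: "\<And>x. N x \<le> C * norm x" using N_upper by blast
  show ?thesis unfolding continuous_on_iff
  proof (intro ballI allI impI)
    fix x and e :: real assume "e > 0"
    show "\<exists>d>0. \<forall>y\<in>UNIV. dist y x < d \<longrightarrow> dist (N y) (N x) < e"
    proof (intro exI[of _ "e / (\<bar>C\<bar> + 1)"] conjI ballI impI)
      show "e / (\<bar>C\<bar> + 1) > 0" using \<open>e>0\<close> by simp
      fix y assume "dist y x < e / (\<bar>C\<bar> + 1)"
      then have "norm (y - x) * (\<bar>C\<bar> + 1) < e" by (simp add: dist_norm field_simps)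
      moreover have "dist (N y) (N x) \<le> \<bar>C\<bar> * norm (y - x)"
        using N_diff[of y x] C[of "y - x"]
        by (simp add: dist_real_def) (smt (verit) mult_right_mono norm_ge_zero abs_ge_self)
      ultimately show "dist (N y) (N x) < e"
        by (smt (verit) mult_nonneg_nonneg norm_ge_zero distrib_left mult.commute)
    qed
  qed
qed

lemma N_lower: "\<exists>c>0. \<forall>x. c * norm x \<le> N x"
proof -
  have cs: "compact (sphere (0::'k^'n) 1)" by simp
  have ne: "sphere (0::'k^'n) 1 \<noteq> {}"
  proof -
    obtain i :: 'n where True by simp
    have "axis i (1::'k) \<noteq> 0" by (simp add: axis_eq_0_iff)
    then have "(1 / norm (axis i (1::'k))) *\<^sub>R axis i (1::'k) \<in> sphere 0 1"
      using \<open>axis i (1::'k) \<noteq> 0\<close> unfolding mem_sphere dist_0_norm norm_scaleR by simp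
    then show ?thesis by blast
  qed
  obtain u where u: "u \<in> sphere 0 1" and umin: "\<And>y. y \<in> sphere 0 1 \<Longrightarrow> N u \<le> N y"
    using continuous_attains_inf[OF cs ne continuous_on_subset[OF N_cont]] by blast
  have "u \<noteq> 0" using u by auto
  then have c: "N u > 0" using N_zero_iff N_nonneg by (metis less_eq_real_def)
  have "N u * norm x \<le> N x" for x
  proof (cases "x = 0")
    case False
    then have "(1 / norm x) *\<^sub>R x \<in> sphere 0 1" by simp
    from umin[OF this] have "N u \<le> N x / norm x" by (simp add: N_scaleR)
    then show ?thesis using False by (simp add: field_simps)
  qed simp
  then show ?thesis using c by blast
qed


definition rep :: "'k^'n \<Rightarrow> ('k^'n \<Rightarrow> 'k)" where
  "rep a = (\<lambda>x. \<Sum>i\<in>UNIV. x$i * a$i)"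

lemma klin_0: "klinear_fun \<psi> \<Longrightarrow> \<psi> 0 = 0"
  proof -
  assume k: "klinear_fun \<psi>"
  have "\<psi> (0 + 0) = \<psi> 0 + \<psi> 0" using k by (simp only: klinear_fun_def)
  then show ?thesis by simp
qed

lemma klin_sum: "klinear_fun \<psi> \<Longrightarrow> \<psi> (sum f A) = (\<Sum>i\<in>A. \<psi> (f i))"
proof (induction A rule: infinite_finite_induct)
  case (insert a A) then show ?case by (simp add: klinear_fun_def)
qed (simp_all add: klin_0)

lemma klin_rep: "klinear_fun \<psi> \<Longrightarrow> \<psi> = rep (\<chi> i. \<psi> (axis i 1))"
proof
  fix x assume k: "klinear_fun \<psi>"
  have "\<psi> x = \<psi> (\<Sum>i\<in>UNIV. x$i *s axis i 1)" by (simp add: basis_expansion)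
  also have "\<dots> = (\<Sum>i\<in>UNIV. \<psi> (x$i *s axis i 1))" by (rule klin_sum[OF k])
  also have "\<dots> = (\<Sum>i\<in>UNIV. x$i * \<psi> (axis i 1))" using k by (simp add: klinear_fun_def)
  finally show "\<psi> x = rep (\<chi> i. \<psi> (axis i 1)) x" by (simp add: rep_def)
qed

lemma rep_klin: "klinear_fun (rep a)"
  unfolding klinear_fun_def rep_def
  by (simp add: distrib_right sum.distrib sum_distrib_left mult.assoc)

lemma rep_cont: "continuous_on UNIV (rep a)"
  unfolding rep_def by (intro continuous_intros)

lemma rep_meas: "rep a \<in> borel_measurable borel"
  by (rule borel_measurable_continuous_onI[OF rep_cont])

definition cN where "cN = (SOME c. c > 0 \<and> (\<forall>x. c * norm x \<le> N x))"
lemma cN: "cN > 0" "cN * norm x \<le> N x"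
  using someI_ex[OF N_lower] unfolding cN_def by auto

lemma norm_le_N: "norm x \<le> N x / cN"
  using cN by (simp add: field_simps)

lemma rep_diff_bound: "norm (rep a x - rep b x) \<le> (\<Sum>i\<in>UNIV. norm (a$i - b$i)) * (N x / cN)"
proof -
  have "rep a x - rep b x = (\<Sum>i\<in>UNIV. x$i * (a$i - b$i))"
    by (simp add: rep_def sum_subtractf right_diff_distrib)
  also have "norm \<dots> \<le> (\<Sum>i\<in>UNIV. norm (x$i) * norm (a$i - b$i))"
    by (rule order_trans[OF norm_sum]) (simp add: norm_mult)
  also have "\<dots> \<le> (\<Sum>i\<in>UNIV. (N x / cN) * norm (a$i - b$i))"
    by (intro sum_mono mult_right_mono order_trans[OF Finite_Cartesian_Product.norm_nth_le norm_le_N]) simp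
  finally show ?thesis by (simp add: sum_distrib_left mult.commute)
qed

lemma rep_bound: "norm (rep a x) \<le> (\<Sum>i\<in>UNIV. norm (a$i)) * (N x / cN)"
proof -
  have "rep 0 x = 0" by (simp add: rep_def)
  then show ?thesis using rep_diff_bound[where a=a and b=0 and x=x] by simp
qed

lemma klin_bound: "klinear_fun (\<psi>::'k^'n\<Rightarrow>'k) \<Longrightarrow> \<exists>L. \<forall>x. norm (\<psi> x) \<le> L * N x"
proof -
  assume "klinear_fun \<psi>"
  then obtain a where a: "\<psi> = rep a" using klin_rep by blast
  show ?thesis unfolding a
  proof (rule exI[of _ "(\<Sum>i\<in>UNIV. norm (a$i)) / cN"], rule allI)
    fix x show "norm (rep a x) \<le> (\<Sum>i\<in>UNIV. norm (a$i)) / cN * N x"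
      using rep_bound[where a=a and x=x] by simp
  qed
qed

lemma klin_meas: "klinear_fun (\<psi>::'k^'n\<Rightarrow>'k) \<Longrightarrow> \<psi> \<in> borel_measurable borel"
proof -
  assume "klinear_fun \<psi>"
  then obtain a where a: "\<psi> = rep a" using klin_rep by blast
  show ?thesis unfolding a by (rule rep_meas)
qed

lemma sphere_ne: "{x. N x = 1} \<noteq> {}"
proof -
  obtain i :: 'n where True by simp
  have "axis i (1::'k) \<noteq> 0" by (simp add: axis_eq_0_iff)
  then have "N (axis i (1::'k)) > 0" using N_zero_iff N_nonneg by (metis less_eq_real_def)
  then have "N ((1 / N (axis i (1::'k))) *\<^sub>R axis i 1) = 1" by (simp add: N_scaleR)
  then show ?thesis by blast
qed

definition bnd :: "('k^'n \<Rightarrow> 'k) \<Rightarrow> bool" where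
  "bnd P \<longleftrightarrow> bdd_above ((\<lambda>x. norm (P x)) ` {x. N x = 1})"

lemma ss_upper: "bnd P \<Longrightarrow> N u = 1 \<Longrightarrow> norm (P u) \<le> sphere_sup N P"
  unfolding bnd_def sphere_sup_def by (rule cSUP_upper) auto

lemma ss_least: "(\<And>u. N u = 1 \<Longrightarrow> norm (P u) \<le> M) \<Longrightarrow> sphere_sup N P \<le> M"
  unfolding sphere_sup_def by (rule cSUP_least[OF sphere_ne]) auto

lemma ss_nonneg: "bnd P \<Longrightarrow> sphere_sup N P \<ge> 0"
proof -
  assume b: "bnd P"
  obtain u where "N u = 1" using sphere_ne by blast
  from ss_upper[OF b this] show ?thesis using norm_ge_zero[of "P u"] by linarith
qed

lemma klin_bnd: "klinear_fun (\<psi>::'k^'n\<Rightarrow>'k) \<Longrightarrow> bnd \<psi>"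
proof -
  assume "klinear_fun \<psi>"
  then obtain L where L: "\<And>x. norm (\<psi> x) \<le> L * N x" using klin_bound by blast
  show ?thesis unfolding bnd_def bdd_above_def using L by (intro exI[of _ L]) (auto, metis mult.right_neutral)
qed

lemma klin_le: assumes k: "klinear_fun \<psi>" shows "norm (\<psi> x) \<le> sphere_sup N \<psi> * N x"
proof (cases "x = 0")
  case True then show ?thesis using klin_0[OF k] ss_nonneg[OF klin_bnd[OF k]] by simp
next
  case False
  then have Np: "N x > 0" using N_zero_iff N_nonneg by (metis less_eq_real_def)
  define u where "u = (1 / N x) *\<^sub>R x"
  have "N u = 1" using Np by (simp add: u_def N_scaleR)
  from ss_upper[OF klin_bnd[OF k] this] have "norm (\<psi> u) \<le> sphere_sup N \<psi>" .
  moreover have "\<psi> u = of_real (1 / N x) * \<psi> x"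
    using k by (simp add: u_def scaleR_as_smult klinear_fun_def)
  ultimately have "norm (\<psi> x) / N x \<le> sphere_sup N \<psi>" using Np by (simp add: norm_mult norm_divide)
  then show ?thesis using Np by (simp add: field_simps)
qed


lemma prod_bnd: assumes "\<And>i. i\<in>I \<Longrightarrow> klinear_fun (\<psi> i)"
  shows "bnd (\<lambda>x. \<Prod>i\<in>I. \<psi> i x)"
proof -
  have "norm (\<Prod>i\<in>I. \<psi> i u) \<le> (\<Prod>i\<in>I. sphere_sup N (\<psi> i))" if "N u = 1" for u
    unfolding prod_norm[symmetric]
    by (intro prod_mono conjI norm_ge_zero ss_upper klin_bnd assms that)
  then show ?thesis unfolding bnd_def bdd_above_def by auto
qed

lemma ss_scale:
  assumes b: "bnd P" and r: "r > 0"
  shows "sphere_sup N (\<lambda>x. P x / of_real r) = sphere_sup N P / r"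
proof (rule antisym)
  show "sphere_sup N (\<lambda>x. P x / of_real r) \<le> sphere_sup N P / r"
    using ss_upper[OF b] r by (intro ss_least) (simp add: norm_divide divide_right_mono)
  have b2: "bnd (\<lambda>x. P x / of_real r)"
    using b r unfolding bnd_def bdd_above_def
    by (auto simp: norm_divide) (metis divide_right_mono less_eq_real_def)
  have "sphere_sup N P \<le> sphere_sup N (\<lambda>x. P x / of_real r) * r"
  proof (rule ss_least)
    fix u assume u: "N u = 1"
    have "norm (P u) / r \<le> sphere_sup N (\<lambda>x. P x / of_real r)"
      using ss_upper[OF b2 u] r by (simp add: norm_divide)
    then show "norm (P u) \<le> sphere_sup N (\<lambda>x. P x / of_real r) * r" using r by (simp add: field_simps)
  qed
  then show "sphere_sup N P / r \<le> sphere_sup N (\<lambda>x. P x / of_real r)" using r by (simp add: field_simps)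
qed

end

locale setting = nrm N for N :: "'k::{real_normed_field,heine_borel,second_countable_topology} ^ 'n::finite \<Rightarrow> real" +
  fixes K and \<mu> :: "('k^'n) measure"
  assumes Ksub: "K \<subseteq> {x. N x \<le> 1}" and sets_mu: "sets \<mu> = sets (restrict_space borel K)"
    and prob: "prob_space \<mu>" and adm: "admissible N \<mu>"
begin

definition Sf where "Sf = {\<psi>. klinear_fun \<psi> \<and> sphere_sup N \<psi> = 1}"
definition g where "g \<psi> = (\<integral>x. ln (norm (\<psi> x)) \<partial>\<mu>)"

lemma fin: "finite_measure \<mu>" using prob unfolding prob_space_def by blast

lemma space_mu: "space \<mu> = K"
  using sets_eq_imp_space_eq[OF sets_mu] by (simp add: space_restrict_space)

lemma meas: "f \<in> borel_measurable borel \<Longrightarrow> f \<in> borel_measurable \<mu>"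
  by (subst measurable_cong_sets[OF sets_mu refl]) (rule measurable_restrict_space1)

lemma Sf_AE: "\<psi> \<in> Sf \<Longrightarrow> AE x in \<mu>. \<psi> x \<noteq> 0"
  using adm unfolding admissible_def Sf_def by blast
lemma Sf_int: "\<psi> \<in> Sf \<Longrightarrow> integrable \<mu> (\<lambda>x. ln (norm (\<psi> x)))"
  using adm unfolding admissible_def Sf_def by blast

lemma Sf_le1: "\<psi> \<in> Sf \<Longrightarrow> x \<in> space \<mu> \<Longrightarrow> norm (\<psi> x) \<le> 1"
  using klin_le[of \<psi> x] Ksub space_mu unfolding Sf_def by auto

lemma main_ineq:
  assumes psi0: "\<psi>0 \<in> Sf" and minim: "\<And>\<phi>. \<phi> \<in> Sf \<Longrightarrow> g \<psi>0 \<le> g \<phi>"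
    and n: "n \<ge> 1" and lin: "\<And>i. i < n \<Longrightarrow> klinear_fun (\<psi> i)"
  shows "(\<Prod>i<n. sphere_sup N (\<psi> i)) \<le> exp (- real n * g \<psi>0) * sphere_sup N (\<lambda>x. \<Prod>i<n. \<psi> i x)"
proof -
  define P where "P = (\<lambda>x. \<Prod>i<n. \<psi> i x)"
  have bP: "bnd P" unfolding P_def by (rule prod_bnd) (use lin in auto)
  have ssP: "sphere_sup N P \<ge> 0" by (rule ss_nonneg[OF bP])
  show ?thesis
  proof (cases "\<exists>i<n. sphere_sup N (\<psi> i) = 0")
    case True
    then have z: "(\<Prod>i<n. sphere_sup N (\<psi> i)) = 0" by (metis finite_lessThan lessThan_iff prod_zero_iff)
    show ?thesis unfolding z P_def[symmetric] using ssP by simp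
  next
    case False
    define s where "s i = sphere_sup N (\<psi> i)" for i
    have spos: "s i > 0" if "i < n" for i
      using False ss_nonneg[OF klin_bnd[OF lin[OF that]]] that unfolding s_def by force
    define \<phi> where "\<phi> i = (\<lambda>x. \<psi> i x / of_real (s i))" for i
    have phiS: "\<phi> i \<in> Sf" if "i < n" for i
    proof -
      have "klinear_fun (\<phi> i)" using lin[OF that] unfolding \<phi>_def klinear_fun_def
        by (simp add: add_divide_distrib)
      moreover have "sphere_sup N (\<phi> i) = 1"
        unfolding \<phi>_def using ss_scale[OF klin_bnd[OF lin[OF that]] spos[OF that]] spos[OF that]
        by (simp add: s_def)
      ultimately show ?thesis by (simp add: Sf_def)
    qed
    define \<Phi> where "\<Phi> = (\<lambda>x. \<Prod>i<n. \<phi> i x)"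
    have bPhi: "bnd \<Phi>" unfolding \<Phi>_def by (rule prod_bnd) (use phiS Sf_def in auto)
    have AEall: "AE x in \<mu>. \<forall>i\<in>{..<n}. \<phi> i x \<noteq> 0"
      by (rule AE_finite_allI) (auto intro: Sf_AE phiS)
    have eqAE: "AE x in \<mu>. ln (norm (\<Phi> x)) = (\<Sum>i<n. ln (norm (\<phi> i x)))"
      using AEall by eventually_elim (simp add: \<Phi>_def prod_norm[symmetric], rule ln_prod, auto)
    have intsum: "integrable \<mu> (\<lambda>x. \<Sum>i<n. ln (norm (\<phi> i x)))"
      by (rule Bochner_Integration.integrable_sum[where f="\<lambda>i x. ln (norm (\<phi> i x))"], rule Sf_int, rule phiS, simp)
    have mphi: "(\<phi> i) \<in> borel_measurable borel" if "i \<in> {..<n}" for i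
      using phiS[of i] that klin_meas by (auto simp: Sf_def)
    have mPhi: "\<Phi> \<in> borel_measurable borel"
      unfolding \<Phi>_def by (rule borel_measurable_prod[where f="\<lambda>i x. \<phi> i x", OF mphi])
    have mlPhi: "(\<lambda>x. ln (norm (\<Phi> x))) \<in> borel_measurable \<mu>"
      by (rule meas) (use mPhi in measurable)
    have intPhi: "integrable \<mu> (\<lambda>x. ln (norm (\<Phi> x)))"
      by (rule integrable_cong_AE_imp[OF intsum mlPhi AE_symmetric[OF eqAE]])
    have "real n * g \<psi>0 = (\<Sum>i<n. g \<psi>0)" by simp
    also have "\<dots> \<le> (\<Sum>i<n. g (\<phi> i))" by (intro sum_mono minim phiS) simp
    also have "\<dots> = (\<integral>x. (\<Sum>i<n. ln (norm (\<phi> i x))) \<partial>\<mu>)"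
      unfolding g_def by (rule Bochner_Integration.integral_sum[symmetric]) (intro Sf_int phiS, simp)
    also have "\<dots> = (\<integral>x. ln (norm (\<Phi> x)) \<partial>\<mu>)"
      by (rule integral_cong_AE[OF _ _ AE_symmetric[OF eqAE]]) (use intsum intPhi in auto)
    finally have step1: "real n * g \<psi>0 \<le> (\<integral>x. ln (norm (\<Phi> x)) \<partial>\<mu>)" .
    have Phi_bound: "norm (\<Phi> x) \<le> sphere_sup N \<Phi>" if x: "x \<in> space \<mu>" and nz: "\<Phi> x \<noteq> 0" for x
    proof -
      have "x \<noteq> 0"
      proof
        assume "x = 0"
        then have "\<phi> 0 x = 0" using phiS[of 0] n klin_0 by (auto simp: Sf_def)
        then show False using nz n unfolding \<Phi>_def by (metis lessThan_iff less_one less_le_trans prod_zero_iff finite_lessThan)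
      qed
      then have Np: "N x > 0" using N_zero_iff N_nonneg by (metis less_eq_real_def)
      have Nle: "N x \<le> 1" using x space_mu Ksub by auto
      define u where "u = (1 / N x) *\<^sub>R x"
      have u1: "N u = 1" using Np by (simp add: u_def N_scaleR)
      have "\<phi> i u = of_real (1 / N x) * \<phi> i x" if "i < n" for i
        using phiS[OF that] by (simp add: u_def scaleR_as_smult klinear_fun_def Sf_def)
      then have "\<Phi> u = (\<Prod>i<n. of_real (1 / N x) * \<phi> i x)" unfolding \<Phi>_def by simp
      also have "\<dots> = of_real (1 / N x) ^ n * \<Phi> x" unfolding \<Phi>_def prod.distrib prod_constant card_lessThan ..
      finally have "norm (\<Phi> u) = (1 / N x) ^ n * norm (\<Phi> x)"
        using Np by (simp add: norm_mult norm_power norm_divide)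
      then have "norm (\<Phi> x) = N x ^ n * norm (\<Phi> u)" using Np by (simp add: field_simps)
      also have "\<dots> \<le> 1 * norm (\<Phi> u)" using Np Nle by (intro mult_right_mono power_le_one) auto
      also have "\<dots> \<le> sphere_sup N \<Phi>" using ss_upper[OF bPhi u1] by simp
      finally show ?thesis .
    qed
    have AEPhi: "AE x in \<mu>. \<Phi> x \<noteq> 0"
      using AEall by eventually_elim (auto simp: \<Phi>_def)
    have AEb: "AE x in \<mu>. norm (\<Phi> x) \<le> sphere_sup N \<Phi> \<and> \<Phi> x \<noteq> 0"
      using AEPhi AE_space by eventually_elim (auto intro: Phi_bound)
    have sspos: "sphere_sup N \<Phi> > 0"
    proof (rule ccontr)
      assume a: "\<not> ?thesis"
      have "AE x in \<mu>. False" using AEb by eventually_elim (metis a zero_less_norm_iff less_le_trans)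
      then show False using prob by (simp add: prob_space.AE_False)
    qed
    have "(\<integral>x. ln (norm (\<Phi> x)) \<partial>\<mu>) \<le> (\<integral>x. ln (sphere_sup N \<Phi>) \<partial>\<mu>)"
    proof (rule integral_mono_AE[OF intPhi])
      show "integrable \<mu> (\<lambda>x. ln (sphere_sup N \<Phi>))" using fin by (rule finite_measure.integrable_const)
      show "AE x in \<mu>. ln (norm (\<Phi> x)) \<le> ln (sphere_sup N \<Phi>)"
        using AEb by eventually_elim (use sspos in \<open>auto simp: ln_le_cancel_iff\<close>)
    qed
    also have "\<dots> = ln (sphere_sup N \<Phi>)" using prob by (simp add: prob_space.prob_space)
    finally have "real n * g \<psi>0 \<le> ln (sphere_sup N \<Phi>)" using step1 by linarith
    then have e1: "exp (real n * g \<psi>0) \<le> sphere_sup N \<Phi>" using sspos by (metis exp_ln exp_le_cancel_iff)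
    have pp: "(\<Prod>i<n. s i) > 0" using spos by (intro prod_pos) auto
    have "sphere_sup N \<Phi> \<le> sphere_sup N P / (\<Prod>i<n. s i)"
    proof (rule ss_least)
      fix u assume u: "N u = 1"
      have "\<Phi> u = P u / of_real (\<Prod>i<n. s i)"
        by (simp add: \<Phi>_def \<phi>_def P_def prod_dividef)
      moreover have "norm (of_real (\<Prod>i<n. s i) :: 'k) = (\<Prod>i<n. s i)" using pp by (simp only: norm_of_real abs_of_pos)
      ultimately have "norm (\<Phi> u) = norm (P u) / (\<Prod>i<n. s i)" by (simp only: norm_divide)
      also have "\<dots> \<le> sphere_sup N P / (\<Prod>i<n. s i)"
        using ss_upper[OF bP u] pp by (simp add: divide_right_mono)
      finally show "norm (\<Phi> u) \<le> sphere_sup N P / (\<Prod>i<n. s i)" .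
    qed
    then have "sphere_sup N \<Phi> * (\<Prod>i<n. s i) \<le> sphere_sup N P" using pp
      by (simp add: field_simps)
    moreover have "exp (real n * g \<psi>0) * (\<Prod>i<n. s i) \<le> sphere_sup N \<Phi> * (\<Prod>i<n. s i)"
      using e1 pp by (intro mult_right_mono) auto
    ultimately have "exp (real n * g \<psi>0) * (\<Prod>i<n. s i) \<le> sphere_sup N P" by linarith
    then have "(\<Prod>i<n. s i) \<le> exp (- real n * g \<psi>0) * sphere_sup N P"
      by (simp add: exp_minus field_simps)
    then show ?thesis by (simp add: s_def P_def)
  qed
qed


lemma normalize_Sf:
  assumes k: "klinear_fun \<psi>" and p: "sphere_sup N \<psi> > 0"
  shows "(\<lambda>x. \<psi> x / of_real (sphere_sup N \<psi>)) \<in> Sf"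
proof -
  have "klinear_fun (\<lambda>x. \<psi> x / of_real (sphere_sup N \<psi>))" using k unfolding klinear_fun_def
    by (simp add: add_divide_distrib)
  moreover have "sphere_sup N (\<lambda>x. \<psi> x / of_real (sphere_sup N \<psi>)) = 1"
    using ss_scale[OF klin_bnd[OF k] p] p by simp
  ultimately show ?thesis by (simp add: Sf_def)
qed

lemma Sf_ne: "Sf \<noteq> {}"
proof -
  obtain i :: 'n where True by simp
  define \<pi> where "\<pi> = rep (axis i (1::'k))"
  have k: "klinear_fun \<pi>" unfolding \<pi>_def by (rule rep_klin)
  have "axis i (1::'k) \<noteq> 0" by (simp add: axis_eq_0_iff)
  then have Np: "N (axis i (1::'k)) > 0" using N_zero_iff N_nonneg by (metis less_eq_real_def)
  define u where "u = (1 / N (axis i (1::'k))) *\<^sub>R axis i (1::'k)"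
  have u1: "N u = 1" using Np by (simp add: u_def N_scaleR)
  have pe: "\<pi> x = x $ i" for x
  proof -
    have "\<forall>j. x$j * axis i (1::'k) $ j = (if j = i then x$i else 0)" by (simp add: axis_def)
    then show ?thesis unfolding \<pi>_def rep_def by (simp add: sum.delta)
  qed
  have "\<pi> u = of_real (1 / N (axis i (1::'k)))" unfolding pe u_def by (simp add: of_real_def)
  then have "norm (\<pi> u) > 0" using Np by simp
  then have "sphere_sup N \<pi> > 0" using ss_upper[OF klin_bnd[OF k] u1] by linarith
  from normalize_Sf[OF k this] show ?thesis by blast
qed

lemma trunc_eq: "t \<ge> 0 \<Longrightarrow> trunc_log m t = ln (max t (exp (- real m)))"
proof -
  assume t: "t \<ge> 0"
  show ?thesis
  proof (cases "t = 0")
    case True then show ?thesis by (simp add: trunc_log_def)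
  next
    case nz: False
    then have tp: "t > 0" using t by simp
    show ?thesis
    proof (cases "t \<ge> exp (- real m)")
      case True
      then have "ln t \<ge> - real m" using tp by (metis ln_exp ln_le_cancel_iff exp_gt_zero)
      then have "trunc_log m t = ln t" using nz unfolding trunc_log_def by simp
      moreover have "max t (exp (- real m)) = t" using True by simp
      ultimately show ?thesis by simp
    next
      case c: False
      then have "ln t \<le> - real m" using tp by (metis ln_exp ln_le_cancel_iff exp_gt_zero less_eq_real_def not_le)
      then have "trunc_log m t = - real m" using nz unfolding trunc_log_def by simp
      moreover have "max t (exp (- real m)) = exp (- real m)" using c by simp
      ultimately show ?thesis by simp
    qed
  qed
qed

lemma trunc_tendsto:
  assumes "(f \<longlongrightarrow> t) F" "\<And>k. f k \<ge> 0" "t \<ge> 0"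
  shows "((\<lambda>k. trunc_log m (f k)) \<longlongrightarrow> trunc_log m t) F"
proof -
  have "((\<lambda>k. ln (max (f k) (exp (- real m)))) \<longlongrightarrow> ln (max t (exp (- real m)))) F"
    by (intro tendsto_intros assms) (metis exp_gt_zero max.strict_coboundedI2 less_irrefl)
  then show ?thesis using assms by (simp add: trunc_eq)
qed

lemma trunc_bound: "\<psi> \<in> Sf \<Longrightarrow> x \<in> space \<mu> \<Longrightarrow> norm (trunc_log m (norm (\<psi> x))) \<le> real m"
proof -
  assume a: "\<psi> \<in> Sf" "x \<in> space \<mu>"
  have le1: "norm (\<psi> x) \<le> 1" by (rule Sf_le1[OF a])
  show ?thesis
  proof (cases "\<psi> x = 0")
    case True then show ?thesis by (simp add: trunc_log_def)
  next
    case False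
    then have "ln (norm (\<psi> x)) \<le> 0" using le1 by simp
    then show ?thesis using False by (simp add: trunc_log_def)
  qed
qed

lemma trunc_meas: "klinear_fun \<psi> \<Longrightarrow> (\<lambda>x. trunc_log m (norm (\<psi> x))) \<in> borel_measurable \<mu>"
proof -
  assume "klinear_fun \<psi>"
  then have mp: "\<psi> \<in> borel_measurable borel" by (rule klin_meas)
  show ?thesis unfolding trunc_log_def by (rule meas) (use mp in measurable)
qed

lemma trunc_int: assumes a: "\<psi> \<in> Sf" shows "integrable \<mu> (\<lambda>x. trunc_log m (norm (\<psi> x)))"
proof (rule finite_measure.integrable_const_bound[OF fin, where B="real m"])
  show "AE x in \<mu>. norm (trunc_log m (norm (\<psi> x))) \<le> real m"
    by (rule AE_I2) (rule trunc_bound[OF a])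
  show "(\<lambda>x. trunc_log m (norm (\<psi> x))) \<in> borel_measurable \<mu>"
    using a by (intro trunc_meas) (simp add: Sf_def)
qed

lemma Sf_seq:
  fixes \<psi> :: "nat \<Rightarrow> 'k^'n \<Rightarrow> 'k"
  assumes S: "\<And>k. \<psi> k \<in> Sf"
  shows "\<exists>r a. strict_mono r \<and> rep a \<in> Sf \<and> (\<forall>x. (\<lambda>k. \<psi> (r k) x) \<longlonglongrightarrow> rep a x)"
proof -
  define A where "A k = (\<chi> i. \<psi> k (axis i 1))" for k
  have rk: "\<psi> k = rep (A k)" for k using klin_rep S[of k] by (simp add: Sf_def A_def)
  have cb: "norm (A k $ i) \<le> N (axis i 1)" for k i
    using klin_le[of "\<psi> k" "axis i 1"] S[of k] by (simp add: A_def Sf_def)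
  have "norm (A k) \<le> (\<Sum>i\<in>UNIV. N (axis i 1))" for k
  proof -
    have "norm (A k) \<le> (\<Sum>i\<in>UNIV. norm (A k $ i))" unfolding norm_vec_def by (rule L2_set_le_sum) simp
    also have "\<dots> \<le> (\<Sum>i\<in>UNIV. N (axis i 1))" by (intro sum_mono cb)
    finally show ?thesis .
  qed
  then have "bounded (range A)" unfolding bounded_iff by blast
  then obtain l r where r: "strict_mono r" and lim: "(A \<circ> r) \<longlonglongrightarrow> l"
    using bounded_imp_convergent_subsequence[of A] \<open>bounded (range A)\<close> by blast
  have pw: "(\<lambda>k. \<psi> (r k) x) \<longlonglongrightarrow> rep l x" for x
    unfolding rk rep_def using lim by (intro tendsto_intros) (simp add: o_def)
  define \<delta> where "\<delta> k = (\<Sum>i\<in>UNIV. norm (l $ i - A (r k) $ i)) * (1 / cN)" for k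
  have dlim: "\<delta> \<longlonglongrightarrow> 0"
  proof -
    have "\<delta> \<longlonglongrightarrow> (\<Sum>i\<in>UNIV. norm (l $ i - l $ i)) * (1 / cN)"
      unfolding \<delta>_def using lim by (intro tendsto_intros) (simp add: o_def)
    then show ?thesis by simp
  qed
  have diff: "norm (rep l u - \<psi> (r k) u) \<le> \<delta> k" if "N u = 1" for u k
    using rep_diff_bound[where a=l and b="A (r k)" and x=u] that by (simp add: rk \<delta>_def)
  have kl: "klinear_fun (rep l)" by (rule rep_klin)
  have bl: "bnd (rep l)" by (rule klin_bnd[OF kl])
  have up: "\<bar>sphere_sup N (rep l) - 1\<bar> \<le> \<delta> k" for k
  proof -
    have S1: "sphere_sup N (\<psi> (r k)) = 1" and kk: "klinear_fun (\<psi> (r k))" using S[of "r k"] by (auto simp: Sf_def)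
    have "sphere_sup N (rep l) \<le> 1 + \<delta> k"
    proof (rule ss_least)
      fix u assume u: "N u = 1"
      have "norm (\<psi> (r k) u) \<le> 1" using ss_upper[OF klin_bnd[OF kk] u] S1 by simp
      then show "norm (rep l u) \<le> 1 + \<delta> k" using diff[OF u, of k] norm_triangle_ineq2[of "rep l u" "\<psi> (r k) u"] by linarith
    qed
    moreover have "1 \<le> sphere_sup N (rep l) + \<delta> k"
    proof -
      have "sphere_sup N (\<psi> (r k)) \<le> sphere_sup N (rep l) + \<delta> k"
      proof (rule ss_least)
        fix u assume u: "N u = 1"
        have "norm (rep l u) \<le> sphere_sup N (rep l)" by (rule ss_upper[OF bl u])
        then show "norm (\<psi> (r k) u) \<le> sphere_sup N (rep l) + \<delta> k"
          using diff[OF u, of k] norm_triangle_ineq3[of "rep l u" "\<psi> (r k) u"]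
          by (smt (verit) norm_minus_commute norm_triangle_ineq2)
      qed
      then show ?thesis using S1 by simp
    qed
    ultimately show ?thesis by linarith
  qed
  have "\<bar>sphere_sup N (rep l) - 1\<bar> \<le> 0"
    by (rule LIMSEQ_le_const[OF dlim]) (use up in auto)
  then have "rep l \<in> Sf" using kl by (simp add: Sf_def)
  then show ?thesis using r pw by blast
qed

lemma lsc:
  fixes \<psi> :: "nat \<Rightarrow> 'k^'n \<Rightarrow> 'k"
  assumes S: "\<And>k. \<psi> k \<in> Sf"
  shows "\<exists>r \<psi>0. strict_mono r \<and> \<psi>0 \<in> Sf \<and> (\<forall>\<epsilon>>0. eventually (\<lambda>k. g \<psi>0 \<le> g (\<psi> (r k)) + \<epsilon>) sequentially)"
proof -
  obtain r a where r: "strict_mono r" and a: "rep a \<in> Sf" and pw: "\<And>x. (\<lambda>k. \<psi> (r k) x) \<longlonglongrightarrow> rep a x"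
    using Sf_seq[where \<psi>=\<psi>] S by blast
  define \<psi>0 where "\<psi>0 = rep a"
  have p0: "\<psi>0 \<in> Sf" using a by (simp add: \<psi>0_def)
  have "eventually (\<lambda>k. g \<psi>0 \<le> g (\<psi> (r k)) + \<epsilon>) sequentially" if e: "\<epsilon> > 0" for \<epsilon>
  proof -
    obtain M where M: "\<And>m \<psi>. m \<ge> M \<Longrightarrow> klinear_fun \<psi> \<and> sphere_sup N \<psi> = 1 \<Longrightarrow>
        \<bar>(\<integral>x. trunc_log m (norm (\<psi> x)) \<partial>\<mu>) - (\<integral>x. ln (norm (\<psi> x)) \<partial>\<mu>)\<bar> < \<epsilon> / 2"
      using adm e unfolding admissible_def by (meson half_gt_zero)
    define G where "G \<phi> = (\<integral>x. trunc_log M (norm (\<phi> x)) \<partial>\<mu>)" for \<phi> :: "'k^'n \<Rightarrow> 'k"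
    have closeG: "\<bar>G \<phi> - g \<phi>\<bar> < \<epsilon> / 2" if "\<phi> \<in> Sf" for \<phi>
      using M[of M \<phi>] that by (simp add: G_def g_def Sf_def)
    have gG: "g \<psi>0 \<le> G \<psi>0"
      unfolding g_def G_def
    proof (rule integral_mono_AE[OF Sf_int[OF p0] trunc_int[OF p0]])
      show "AE x in \<mu>. ln (norm (\<psi>0 x)) \<le> trunc_log M (norm (\<psi>0 x))"
        using Sf_AE[OF p0] by eventually_elim (simp add: trunc_log_def)
    qed
    have conv: "(\<lambda>k. G (\<psi> (r k))) \<longlonglongrightarrow> G \<psi>0"
      unfolding G_def
    proof (rule integral_dominated_convergence[where w="\<lambda>_. real M"])
      show "(\<lambda>x. trunc_log M (norm (\<psi>0 x))) \<in> borel_measurable \<mu>"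
        using p0 by (intro trunc_meas) (simp add: Sf_def)
      show "(\<lambda>x. trunc_log M (norm (\<psi> (r k) x))) \<in> borel_measurable \<mu>" for k
        using S[of "r k"] by (intro trunc_meas) (simp add: Sf_def)
      show "integrable \<mu> (\<lambda>_. real M)" using fin by (rule finite_measure.integrable_const)
      show "AE x in \<mu>. (\<lambda>k. trunc_log M (norm (\<psi> (r k) x))) \<longlonglongrightarrow> trunc_log M (norm (\<psi>0 x))"
        by (intro AE_I2 trunc_tendsto tendsto_norm) (auto simp: \<psi>0_def pw)
      show "AE x in \<mu>. norm (trunc_log M (norm (\<psi> (r k) x))) \<le> real M" for k
        by (intro AE_I2 trunc_bound S)
    qed
    then have "eventually (\<lambda>k. dist (G (\<psi> (r k))) (G \<psi>0) < \<epsilon> / 2) sequentially"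
      using conv half_gt_zero[OF e] unfolding tendsto_iff by blast
    then show ?thesis
    proof (rule eventually_mono)
      fix k assume "dist (G (\<psi> (r k))) (G \<psi>0) < \<epsilon> / 2"
      moreover have "\<bar>G (\<psi> (r k)) - g (\<psi> (r k))\<bar> < \<epsilon> / 2" by (rule closeG[OF S])
      ultimately show "g \<psi>0 \<le> g (\<psi> (r k)) + \<epsilon>" using gG unfolding dist_real_def abs_less_iff by linarith
    qed
  qed
  then show ?thesis using r p0 by blast
qed



lemma minimizer: "\<exists>\<psi>0\<in>Sf. \<forall>\<phi>\<in>Sf. g \<psi>0 \<le> g \<phi>"
proof -
  have bdd: "bdd_below (g ` Sf)"
  proof (rule ccontr)
    assume nb: "\<not> bdd_below (g ` Sf)"
    have "\<exists>\<phi>\<in>Sf. g \<phi> < - real k" for k :: nat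
    proof -
      from nb have "\<not> (\<forall>\<phi>\<in>Sf. - real k \<le> g \<phi>)" unfolding bdd_below_def by auto
      then show ?thesis by (auto simp: not_le)
    qed
    then obtain \<psi> :: "nat \<Rightarrow> 'k^'n \<Rightarrow> 'k" where \<psi>: "\<And>k. \<psi> k \<in> Sf" "\<And>k. g (\<psi> k) < - real k" by metis
    obtain r \<psi>0 where r: "strict_mono r" and p0: "\<psi>0 \<in> Sf"
      and ev: "\<And>\<epsilon>. \<epsilon> > 0 \<Longrightarrow> eventually (\<lambda>k. g \<psi>0 \<le> g (\<psi> (r k)) + \<epsilon>) sequentially"
      using lsc[where \<psi>=\<psi>] \<psi>(1) by blast
    obtain K0 where K0: "\<And>k. k \<ge> K0 \<Longrightarrow> g \<psi>0 \<le> g (\<psi> (r k)) + 1"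
      using ev[of 1] unfolding eventually_sequentially by auto
    obtain k1 :: nat where k1: "2 - g \<psi>0 < real k1" using reals_Archimedean2 by blast
    define k where "k = max K0 k1"
    have "g \<psi>0 \<le> g (\<psi> (r k)) + 1" using K0 by (simp add: k_def)
    moreover have "g (\<psi> (r k)) < - real (r k)" by (rule \<psi>(2))
    moreover have "real k \<le> real (r k)" using seq_suble[OF r, of k] by simp
    moreover have "real k1 \<le> real k" by (simp add: k_def)
    ultimately show False using k1 by linarith
  qed
  define L where "L = Inf (g ` Sf)"
  have ne: "g ` Sf \<noteq> {}" using Sf_ne by simp
  have "\<exists>\<phi>\<in>Sf. g \<phi> < L + 1 / (real k + 1)" for k :: nat
  proof -
    have "Inf (g ` Sf) < L + 1 / (real k + 1)" unfolding L_def by (simp add: add_pos_pos)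
    from cInf_lessD[OF ne this] show ?thesis by blast
  qed
  then obtain \<psi> :: "nat \<Rightarrow> 'k^'n \<Rightarrow> 'k" where \<psi>: "\<And>k. \<psi> k \<in> Sf" "\<And>k. g (\<psi> k) < L + 1 / (real k + 1)" by metis
  obtain r \<psi>0 where r: "strict_mono r" and p0: "\<psi>0 \<in> Sf"
    and ev: "\<And>\<epsilon>. \<epsilon> > 0 \<Longrightarrow> eventually (\<lambda>k. g \<psi>0 \<le> g (\<psi> (r k)) + \<epsilon>) sequentially"
    using lsc[where \<psi>=\<psi>] \<psi>(1) by blast
  have "g \<psi>0 \<le> L"
  proof (rule field_le_epsilon)
    fix e :: real assume e: "e > 0"
    obtain K0 where K0: "\<And>k. k \<ge> K0 \<Longrightarrow> g \<psi>0 \<le> g (\<psi> (r k)) + e / 2"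
      using ev[of "e/2"] e unfolding eventually_sequentially by auto
    obtain k1 :: nat where k1: "2 / e < real k1" using reals_Archimedean2 by blast
    define k where "k = max K0 k1"
    have a1: "g \<psi>0 \<le> g (\<psi> (r k)) + e / 2" using K0 by (simp add: k_def)
    have a2: "g (\<psi> (r k)) < L + 1 / (real (r k) + 1)" by (rule \<psi>(2))
    have "real k1 \<le> real (r k)" using seq_suble[OF r, of k] by (simp add: k_def)
    then have "2 / e < real (r k) + 1" using k1 by linarith
    then have "1 / (real (r k) + 1) < e / 2" using e by (simp add: field_simps)
    then show "g \<psi>0 \<le> L + e" using a1 a2 by linarith
  qed
  moreover have "L \<le> g \<phi>" if "\<phi> \<in> Sf" for \<phi> unfolding L_def by (rule cInf_lower) (use that bdd in auto)
  ultimately show ?thesis using p0 by force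
qed

lemma final: "\<exists>\<psi>0. klinear_fun \<psi>0 \<and> sphere_sup N \<psi>0 = 1 \<and>
  (\<forall>n::nat. n \<ge> 1 \<longrightarrow> c_const N n \<le> exp (- real n * (\<integral>x. ln (norm (\<psi>0 x)) \<partial>\<mu>)))"
proof -
  obtain \<psi>0 where p0: "\<psi>0 \<in> Sf" and minim: "\<And>\<phi>. \<phi> \<in> Sf \<Longrightarrow> g \<psi>0 \<le> g \<phi>"
    using minimizer by blast
  have "c_const N n \<le> exp (- real n * g \<psi>0)" if n: "n \<ge> 1" for n
    unfolding c_const_def
  proof (rule cInf_lower)
    show "exp (- real n * g \<psi>0) \<in> {c. \<forall>\<psi>. (\<forall>i<n. klinear_fun (\<psi> i)) \<longrightarrow>
        (\<Prod>i<n. sphere_sup N (\<psi> i)) \<le> c * sphere_sup N (\<lambda>x. \<Prod>i<n. \<psi> i x)}"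
      using main_ineq[OF p0 minim n] by blast
    show "bdd_below {c. \<forall>\<psi>. (\<forall>i<n. klinear_fun (\<psi> i)) \<longrightarrow>
        (\<Prod>i<n. sphere_sup N (\<psi> i)) \<le> c * sphere_sup N (\<lambda>x. \<Prod>i<n. \<psi> i x)}"
      unfolding bdd_below_def
    proof (intro exI[of _ 0] ballI)
      fix c assume "c \<in> {c. \<forall>\<psi>. (\<forall>i<n. klinear_fun (\<psi> i)) \<longrightarrow>
        (\<Prod>i<n. sphere_sup N (\<psi> i)) \<le> c * sphere_sup N (\<lambda>x. \<Prod>i<n. \<psi> i x)}"
      then have "\<forall>\<psi>. (\<forall>i<n. klinear_fun (\<psi> i)) \<longrightarrow>
        (\<Prod>i<n. sphere_sup N (\<psi> i)) \<le> c * sphere_sup N (\<lambda>x. \<Prod>i<n. \<psi> i x)" by simp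
      then have "(\<forall>i<n. klinear_fun \<psi>0) \<longrightarrow> (\<Prod>i<n. sphere_sup N \<psi>0) \<le> c * sphere_sup N (\<lambda>x. \<Prod>i<n. \<psi>0 x)"
        by (rule spec[of _ "\<lambda>_. \<psi>0"])
      moreover have "klinear_fun \<psi>0" using p0 by (simp add: Sf_def)
      ultimately have "(\<Prod>i<n. sphere_sup N \<psi>0) \<le> c * sphere_sup N (\<lambda>x. \<Prod>i<n. \<psi>0 x)" by blast
      then have c1: "1 \<le> c * sphere_sup N (\<lambda>x. \<Prod>i<n. \<psi>0 x)" using p0 by (simp add: Sf_def)
      have "sphere_sup N (\<lambda>x. \<Prod>i<n. \<psi>0 x) \<ge> 0"
        by (rule ss_nonneg, rule prod_bnd) (use p0 in \<open>auto simp: Sf_def\<close>)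
      then show "0 \<le> c" using c1 by (smt (verit) mult_nonpos_nonneg)
    qed
  qed
  then show ?thesis using p0 by (auto simp: Sf_def g_def)
qed

end

lemma final_global:
  fixes N :: "'k::{real_normed_field,heine_borel,second_countable_topology} ^ 'n::finite \<Rightarrow> real"
  assumes "is_norm_on N" "K \<subseteq> {x. N x \<le> 1}" "sets \<mu> = sets (restrict_space borel K)"
    "prob_space \<mu>" "admissible N \<mu>"
  shows "\<exists>\<psi>0. klinear_fun \<psi>0 \<and> sphere_sup N \<psi>0 = 1 \<and>
    (\<forall>n::nat. n \<ge> 1 \<longrightarrow> c_const N n \<le> exp (- real n * (\<integral>x. ln (norm (\<psi>0 x)) \<partial>\<mu>)))"
proof -
  have "setting N K \<mu>" unfolding setting_def setting_axioms_def nrm_def using assms by auto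
  then show ?thesis by (rule setting.final)
qed

theorem proposition1p6:
  shows
  "(\<forall>(N :: real ^ 'n::finite \<Rightarrow> real) (K :: (real ^ 'n) set) (\<mu> :: (real ^ 'n) measure).
      is_norm_on N \<and> K \<in> sets borel \<and> K \<subseteq> {x. N x \<le> 1} \<and>
      sets \<mu> = sets (restrict_space borel K) \<and> prob_space \<mu> \<and> admissible N \<mu> \<longrightarrow>
      (\<exists>\<psi>\<^sub>0. klinear_fun \<psi>\<^sub>0 \<and> sphere_sup N \<psi>\<^sub>0 = 1 \<and>
         (\<forall>n::nat. n \<ge> 1 \<longrightarrow>
            c_const N n \<le> exp (- real n * (\<integral>x. ln \<bar>\<psi>\<^sub>0 x\<bar> \<partial>\<mu>)))))
   \<and>
   (\<forall>(N :: complex ^ 'n::finite \<Rightarrow> real) (K :: (complex ^ 'n) set) (\<mu> :: (complex ^ 'n) measure).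
      is_norm_on N \<and> K \<in> sets borel \<and> K \<subseteq> {x. N x \<le> 1} \<and>
      sets \<mu> = sets (restrict_space borel K) \<and> prob_space \<mu> \<and> admissible N \<mu> \<longrightarrow>
      (\<exists>\<psi>\<^sub>0. klinear_fun \<psi>\<^sub>0 \<and> sphere_sup N \<psi>\<^sub>0 = 1 \<and>
         (\<forall>n::nat. n \<ge> 1 \<longrightarrow>
            c_const N n \<le> exp (- real n * (\<integral>x. ln (cmod (\<psi>\<^sub>0 x)) \<partial>\<mu>)))))"
proof (intro conjI allI impI)
  fix N :: "real ^ 'n::finite \<Rightarrow> real" and K and \<mu> :: "(real ^ 'n) measure"
  assume "is_norm_on N \<and> K \<in> sets borel \<and> K \<subseteq> {x. N x \<le> 1} \<and>
      sets \<mu> = sets (restrict_space borel K) \<and> prob_space \<mu> \<and> admissible N \<mu>"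
  then show "\<exists>\<psi>\<^sub>0. klinear_fun \<psi>\<^sub>0 \<and> sphere_sup N \<psi>\<^sub>0 = 1 \<and>
         (\<forall>n::nat. n \<ge> 1 \<longrightarrow>
            c_const N n \<le> exp (- real n * (\<integral>x. ln \<bar>\<psi>\<^sub>0 x\<bar> \<partial>\<mu>)))"
    using final_global[of N K \<mu>] by (simp add: real_norm_def)
next
  fix N :: "complex ^ 'n::finite \<Rightarrow> real" and K and \<mu> :: "(complex ^ 'n) measure"
  assume "is_norm_on N \<and> K \<in> sets borel \<and> K \<subseteq> {x. N x \<le> 1} \<and>
      sets \<mu> = sets (restrict_space borel K) \<and> prob_space \<mu> \<and> admissible N \<mu>"
  then show "\<exists>\<psi>\<^sub>0. klinear_fun \<psi>\<^sub>0 \<and> sphere_sup N \<psi>\<^sub>0 = 1 \<and>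
         (\<forall>n::nat. n \<ge> 1 \<longrightarrow>
            c_const N n \<le> exp (- real n * (\<integral>x. ln (cmod (\<psi>\<^sub>0 x)) \<partial>\<mu>)))"
    using final_global[of N K \<mu>] by simp
qed

end
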